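(* Let ${\bf u}\in\mathcal A^{\mathbb N}$ have its language closed under reversal and let $w$ be a palindromic factor of ${\bf u}$. If the graph $\Theta(w)$ is connected, then $m(w)\ge \#E^=(w)-1$; moreover $m(w)>\#E^=(w)-1$ if and only if $\Theta(w)$ contains a cycle, and $m(w)=\#E^=(w)-1$ if and only if $\Theta(w)$ is a tree.
   Context: The language of ${\bf u}$ (set of its finite factors) is closed under reversal if $w$ a factor implies its reversal $\widetilde w$ is a factor; $w$ is a palindrome if $w=\widetilde w$. For a factor $w$: $E^+(w)=\{b: wb\text{ factor}\}$, $E^-(w)=\{a: aw\text{ factor}\}$, $E(w)=\{(a,b): awb\text{ factor}\}$, $E^=(w)=\{a: awa\text{ factor}\}$, and $m(w)=\#E(w)-\#E^+(w)-\#E^-(w)+1$. For a palindromic factor $w$ (so $E^-(w)=E^+(w)$), $\Theta(w)$ is the simple graph with vertex set $E^+(w)$ and edges $\{a,b\}$ for $(a,b)\in E(w)$ with $a\ne b$. *)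

theory Defs
  imports Main
begin

definition factor :: "(nat \<Rightarrow> 'a) \<Rightarrow> 'a list \<Rightarrow> bool" where
  "factor u w \<longleftrightarrow> (\<exists>i. w = map u [i..<i + length w])"

definition lang_closed_rev :: "(nat \<Rightarrow> 'a) \<Rightarrow> bool" where
  "lang_closed_rev u \<longleftrightarrow> (\<forall>w. factor u w \<longrightarrow> factor u (rev w))"

definition palindrome :: "'a list \<Rightarrow> bool" where
  "palindrome w \<longleftrightarrow> w = rev w"

definition Eplus :: "(nat \<Rightarrow> 'a) \<Rightarrow> 'a list \<Rightarrow> 'a set" where
  "Eplus u w = {b. factor u (w @ [b])}"

definition Eminus :: "(nat \<Rightarrow> 'a) \<Rightarrow> 'a list \<Rightarrow> 'a set" where
  "Eminus u w = {a. factor u (a # w)}"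

definition Eboth :: "(nat \<Rightarrow> 'a) \<Rightarrow> 'a list \<Rightarrow> ('a \<times> 'a) set" where
  "Eboth u w = {(a, b). factor u (a # w @ [b])}"

definition Eeq :: "(nat \<Rightarrow> 'a) \<Rightarrow> 'a list \<Rightarrow> 'a set" where
  "Eeq u w = {a. factor u (a # w @ [a])}"

definition mult :: "(nat \<Rightarrow> 'a) \<Rightarrow> 'a list \<Rightarrow> int" where
  "mult u w = int (card (Eboth u w)) - int (card (Eplus u w)) - int (card (Eminus u w)) + 1"

text \<open>Simple graphs given by a vertex set V and a symmetric irreflexive adjacency relation.\<close>

definition graph_connected :: "'v set \<Rightarrow> ('v \<Rightarrow> 'v \<Rightarrow> bool) \<Rightarrow> bool" where
  "graph_connected V adj \<longleftrightarrow>
     (\<forall>x\<in>V. \<forall>y\<in>V. (\<lambda>a b. a \<in> V \<and> b \<in> V \<and> adj a b)\<^sup>*\<^sup>* x y)"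

definition graph_has_cycle :: "'v set \<Rightarrow> ('v \<Rightarrow> 'v \<Rightarrow> bool) \<Rightarrow> bool" where
  "graph_has_cycle V adj \<longleftrightarrow>
     (\<exists>cs. length cs \<ge> 3 \<and> distinct cs \<and> set cs \<subseteq> V \<and>
        (\<forall>i < length cs. adj (cs ! i) (cs ! ((i + 1) mod length cs))))"

definition graph_is_tree :: "'v set \<Rightarrow> ('v \<Rightarrow> 'v \<Rightarrow> bool) \<Rightarrow> bool" where
  "graph_is_tree V adj \<longleftrightarrow> graph_connected V adj \<and> \<not> graph_has_cycle V adj"

definition Theta_V :: "(nat \<Rightarrow> 'a) \<Rightarrow> 'a list \<Rightarrow> 'a set" where
  "Theta_V u w = Eplus u w"

definition Theta_adj :: "(nat \<Rightarrow> 'a) \<Rightarrow> 'a list \<Rightarrow> 'a \<Rightarrow> 'a \<Rightarrow> bool" where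
  "Theta_adj u w a b \<longleftrightarrow> a \<in> Eplus u w \<and> b \<in> Eplus u w \<and> a \<noteq> b \<and>
     ((a, b) \<in> Eboth u w \<or> (b, a) \<in> Eboth u w)"

end

theory Submission
  imports Defs
begin

definition edges :: "'v set \<Rightarrow> ('v \<Rightarrow> 'v \<Rightarrow> bool) \<Rightarrow> 'v set set" where
  "edges V adj = {{a,b} | a b. a \<in> V \<and> b \<in> V \<and> adj a b}"

lemma finite_edges: "finite V \<Longrightarrow> finite (edges V adj)"
  by (rule finite_subset[of _ "Pow V"]) (auto simp: edges_def)

lemma conn_edges_ge:
  assumes fin: "finite V" and r: "r \<in> V" and conn: "graph_connected V adj"
  shows "card V \<le> card (edges V adj) + 1"
proof -
  let ?R = "\<lambda>a b. a \<in> V \<and> b \<in> V \<and> adj a b"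
  have ex: "\<exists>n. (?R^^n) y r" if "y \<in> V" for y
    using conn that r unfolding graph_connected_def by (blast intro: rtranclp_imp_relpowp)
  define d where "d y = (LEAST n. (?R^^n) y r)" for y
  have dp: "(?R^^d y) y r" if "y \<in> V" for y
    unfolding d_def using ex[OF that] by (rule LeastI_ex)
  have dmin: "d y \<le> n" if "(?R^^n) y r" for y n
    unfolding d_def using that by (rule Least_le)
  have step: "\<exists>z. ?R y z \<and> d z < d y" if yV: "y \<in> V" and yr: "y \<noteq> r" for y
  proof -
    obtain k where k: "d y = Suc k"
      using dp[OF yV] yr by (cases "d y") auto
    then obtain z where "?R y z" "(?R^^k) z r"
      using dp[OF yV] relpowp_Suc_D2[of k ?R y r] by auto
    then show ?thesis using dmin[of k z] k by auto
  qed
  define p where "p y = (SOME z. ?R y z \<and> d z < d y)" for y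
  have pp: "?R y (p y) \<and> d (p y) < d y" if "y \<in> V" "y \<noteq> r" for y
    unfolding p_def using someI_ex[OF step[OF that]] .
  have inj: "inj_on (\<lambda>y. {y, p y}) (V - {r})"
  proof (rule inj_onI)
    fix x y assume x: "x \<in> V - {r}" and y: "y \<in> V - {r}" and e: "{x, p x} = {y, p y}"
    show "x = y"
    proof (rule ccontr)
      assume "x \<noteq> y"
      then have "x = p y" "y = p x" using e by (auto simp: doubleton_eq_iff)
      then show False using pp[of x] pp[of y] x y by auto
    qed
  qed
  have sub: "(\<lambda>y. {y, p y}) ` (V - {r}) \<subseteq> edges V adj"
    using pp unfolding edges_def by blast
  have "card (V - {r}) \<le> card (edges V adj)"
    using card_inj_on_le[OF inj sub finite_edges[OF fin]] .
  then show ?thesis using r fin by simp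
qed

lemma sym_rtranclp_gen:
  assumes "\<And>a b. R a b \<Longrightarrow> R b a" and "R\<^sup>*\<^sup>* x y"
  shows "R\<^sup>*\<^sup>* y x"
  using assms(2)
proof (induction rule: rtranclp_induct)
  case base then show ?case by simp
next
  case (step y z)
  then show ?case using assms(1) by (meson converse_rtranclp_into_rtranclp)
qed

lemma cycle_edges:
  assumes fin: "finite V" and conn: "graph_connected V adj"
    and cyc: "graph_has_cycle V adj" and sym: "\<And>a b. adj a b \<Longrightarrow> adj b a"
  shows "card V \<le> card (edges V adj)"
proof -
  obtain cs where len: "length cs \<ge> 3" and dist: "distinct cs" and sub: "set cs \<subseteq> V"
    and ad: "\<forall>i < length cs. adj (cs ! i) (cs ! ((i + 1) mod length cs))"
    using cyc unfolding graph_has_cycle_def by blast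
  define n where "n = length cs"
  define c0 where "c0 = cs ! 0"
  define c1 where "c1 = cs ! 1"
  define adj' where "adj' a b \<longleftrightarrow> adj a b \<and> {a,b} \<noteq> {c0,c1}" for a b
  let ?R = "\<lambda>a b. a \<in> V \<and> b \<in> V \<and> adj a b"
  let ?R' = "\<lambda>a b. a \<in> V \<and> b \<in> V \<and> adj' a b"
  have inV: "cs ! i \<in> V" if "i < n" for i using sub that n_def by auto
  have eqi: "cs ! i = cs ! j \<longleftrightarrow> i = j" if "i < n" "j < n" for i j
    using nth_eq_iff_index_eq[OF dist] that n_def by auto
  have walk: "?R'\<^sup>*\<^sup>* c1 (cs ! j)" if "1 \<le> j" "j < n" for j
    using that
  proof (induction j)
    case 0 then show ?case by simp
  next
    case (Suc j)
    show ?case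
    proof (cases "j = 0")
      case True then show ?thesis by (simp add: c1_def)
    next
      case False
      have ih: "?R'\<^sup>*\<^sup>* c1 (cs ! j)" using Suc False by simp
      have "(j + 1) mod n = Suc j" "j < n" using Suc.prems by auto
      then have "adj (cs ! j) (cs ! Suc j)" using ad n_def by metis
      moreover have "{cs ! j, cs ! Suc j} \<noteq> {c0, c1}"
      proof
        assume h: "{cs ! j, cs ! Suc j} = {c0, c1}"
        have "cs ! Suc j \<in> {cs ! 0, cs ! 1}" using h c0_def c1_def by blast
        moreover have "Suc j < n" "0 < n" "1 < n" using Suc.prems len n_def by auto
        ultimately show False using False eqi by auto
      qed
      ultimately have r1: "?R' (cs ! j) (cs ! Suc j)" unfolding adj'_def
        using inV Suc.prems by auto
      show ?thesis by (rule rtranclp.rtrancl_into_rtrancl[OF ih]) (use r1 in simp)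
    qed
  qed
  have n3: "n \<ge> 3" using len n_def by simp
  have "?R'\<^sup>*\<^sup>* c1 (cs ! (n - 1))" using walk n3 by simp
  moreover have "?R' (cs ! (n - 1)) c0"
  proof -
    have "(n - 1 + 1) mod n = 0" "n - 1 < n" using n3 by auto
    then have "adj (cs ! (n - 1)) (cs ! 0)" using ad n_def by metis
    moreover have "{cs ! (n - 1), c0} \<noteq> {c0, c1}"
    proof
      assume h: "{cs ! (n - 1), c0} = {c0, c1}"
      have "cs ! (n - 1) \<in> {cs ! 0, cs ! 1}" using h c0_def c1_def by blast
      moreover have "n - 1 < n" "0 < n" "1 < n" using n3 by auto
      ultimately show False using n3 eqi by auto
    qed
    ultimately show ?thesis unfolding adj'_def c0_def using inV n3 by auto
  qed
  ultimately have c10: "?R'\<^sup>*\<^sup>* c1 c0" by (rule rtranclp.rtrancl_into_rtrancl)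
  have symR': "?R' a b \<Longrightarrow> ?R' b a" for a b unfolding adj'_def using sym by (auto simp: insert_commute)
  have c01: "?R'\<^sup>*\<^sup>* c0 c1" using sym_rtranclp_gen[OF symR' c10] by blast
  have lift1: "?R'\<^sup>*\<^sup>* a b" if "?R a b" for a b
  proof (cases "{a,b} = {c0,c1}")
    case True then show ?thesis using c01 c10 by (auto simp: doubleton_eq_iff)
  next
    case False then show ?thesis using that unfolding adj'_def by auto
  qed
  have lift: "?R'\<^sup>*\<^sup>* a b" if "?R\<^sup>*\<^sup>* a b" for a b
    using that
  proof (induction rule: rtranclp_induct)
    case base then show ?case by simp
  next
    case (step y z) then show ?case using lift1 by (meson rtranclp_trans)
  qed
  have conn': "graph_connected V adj'"
    using conn lift unfolding graph_connected_def by blast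
  have c0V: "c0 \<in> V" and c1V: "c1 \<in> V" using inV n3 c0_def c1_def by auto
  have adjc: "adj c0 c1"
  proof -
    have "(0 + 1) mod n = 1" using n3 by simp
    moreover have "0 < n" using n3 by simp
    ultimately show ?thesis using ad n_def c0_def c1_def by metis
  qed
  have E: "edges V adj' = edges V adj - {{c0,c1}}"
    unfolding edges_def adj'_def by auto
  have mem: "{c0,c1} \<in> edges V adj" unfolding edges_def using c0V c1V adjc by blast
  have "card V \<le> card (edges V adj') + 1" using conn_edges_ge[OF fin c0V conn'] .
  also have "card (edges V adj') = card (edges V adj) - 1"
    unfolding E using mem finite_edges[OF fin] by simp
  finally have "card V \<le> card (edges V adj) - 1 + 1" .
  moreover have "card (edges V adj) > 0" using mem finite_edges[OF fin] card_gt_0_iff by blast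
  ultimately show ?thesis by linarith
qed

lemma remove_leaf_conn:
  assumes conn: "graph_connected V adj" and xV: "x \<in> V"
    and leaf: "\<And>z. z \<in> V \<Longrightarrow> adj x z \<Longrightarrow> z = y"
    and sym: "\<And>a b. adj a b \<Longrightarrow> adj b a"
  shows "graph_connected (V - {x}) adj"
proof -
  let ?R = "\<lambda>a b. a \<in> V \<and> b \<in> V \<and> adj a b"
  let ?R' = "\<lambda>a b. a \<in> V - {x} \<and> b \<in> V - {x} \<and> adj a b"
  have main: "(b \<noteq> x \<longrightarrow> ?R'\<^sup>*\<^sup>* a b) \<and> (b = x \<longrightarrow> ?R'\<^sup>*\<^sup>* a y)"
    if "?R\<^sup>*\<^sup>* a b" "a \<noteq> x" for a b
    using that(1)
  proof (induction rule: rtranclp_induct)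
    case base then show ?case using that(2) by simp
  next
    case (step w z)
    show ?case
    proof (cases "z = x")
      case True
      show ?thesis
      proof (cases "w = x")
        case True then show ?thesis using step.IH \<open>z = x\<close> by simp
      next
        case False
        then have "w = y" using step.hyps(2) True leaf sym by blast
        then show ?thesis using step.IH False \<open>z = x\<close> by simp
      qed
    next
      case zx: False
      show ?thesis
      proof (cases "w = x")
        case True
        then have "z = y" using step.hyps(2) leaf by blast
        then show ?thesis using step.IH True zx by simp
      next
        case False
        then have ih: "?R'\<^sup>*\<^sup>* a w" using step.IH by simp
        have r1: "?R' w z" using step.hyps(2) False zx by simp
        have "?R'\<^sup>*\<^sup>* a z" by (rule rtranclp.rtrancl_into_rtrancl[OF ih]) (use r1 in simp)
        then show ?thesis using zx by simp
      qed
    qed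
  qed
  show ?thesis unfolding graph_connected_def
  proof (intro ballI)
    fix a b assume a: "a \<in> V - {x}" and b: "b \<in> V - {x}"
    have "?R\<^sup>*\<^sup>* a b" using conn a b unfolding graph_connected_def by blast
    then show "?R'\<^sup>*\<^sup>* a b" using main a b by blast
  qed
qed

lemma leaf_exists:
  assumes fin: "finite V" and conn: "graph_connected V adj"
    and acyc: "\<not> graph_has_cycle V adj" and sym: "\<And>a b. adj a b \<Longrightarrow> adj b a"
    and irr: "\<And>a. \<not> adj a a" and two: "card V \<ge> 2"
  shows "\<exists>x y. x \<in> V \<and> y \<in> V \<and> adj x y \<and> (\<forall>z\<in>V. adj x z \<longrightarrow> z = y)"
proof -
  define P where "P ps \<longleftrightarrow> distinct ps \<and> set ps \<subseteq> V \<and> ps \<noteq> [] \<and>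
      (\<forall>i. Suc i < length ps \<longrightarrow> adj (ps ! i) (ps ! Suc i))" for ps
  obtain r where r: "r \<in> V" using two by fastforce
  have P0: "P [r]" unfolding P_def using r by simp
  have bnd: "length ps < card V + 1" if "P ps" for ps
  proof -
    have "length ps = card (set ps)" using that unfolding P_def by (simp add: distinct_card)
    also have "\<dots> \<le> card V" using that fin unfolding P_def by (simp add: card_mono)
    finally show ?thesis by simp
  qed
  obtain ps where Pps: "P ps" and mx: "\<And>qs. P qs \<Longrightarrow> length qs \<le> length ps"
    using ex_has_greatest_nat[of P "[r]" length "card V + 1"] P0 bnd by blast
  define x where "x = ps ! 0"
  have xV: "x \<in> V" using Pps unfolding P_def x_def by (auto simp: nth_mem subset_iff)
  have nb_in: "z \<in> set ps" if "z \<in> V" "adj x z" for z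
  proof (rule ccontr)
    assume nz: "z \<notin> set ps"
    have "P (z # ps)" unfolding P_def
    proof (intro conjI allI impI)
      show "distinct (z # ps)" using nz Pps unfolding P_def by simp
      show "set (z # ps) \<subseteq> V" using that Pps unfolding P_def by simp
      show "z # ps \<noteq> []" by simp
      fix i assume i: "Suc i < length (z # ps)"
      show "adj ((z # ps) ! i) ((z # ps) ! Suc i)"
      proof (cases i)
        case 0 then show ?thesis using that sym x_def by simp
      next
        case (Suc k) then show ?thesis using Pps i unfolding P_def by simp
      qed
    qed
    then show False using mx[of "z # ps"] by simp
  qed
  have nb_1: "z = ps ! 1" if zV: "z \<in> V" and axz: "adj x z" for z
  proof -
    obtain j where j: "j < length ps" "z = ps ! j" using nb_in[OF zV axz] by (auto simp: in_set_conv_nth)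
    have "j \<noteq> 0"
    proof
      assume "j = 0" then show False using j axz irr[of x] x_def by simp
    qed
    moreover have "\<not> j \<ge> 2"
    proof
      assume j2: "j \<ge> 2"
      define cs where "cs = take (Suc j) ps"
      have lc: "length cs = Suc j" using j cs_def by simp
      have "graph_has_cycle V adj" unfolding graph_has_cycle_def
      proof (intro exI conjI allI impI)
        show "3 \<le> length cs" using lc j2 by simp
        show "distinct cs" using Pps cs_def unfolding P_def by simp
        show "set cs \<subseteq> V" using Pps cs_def unfolding P_def by (meson order_trans set_take_subset)
        fix i assume i: "i < length cs"
        show "adj (cs ! i) (cs ! ((i + 1) mod length cs))"
        proof (cases "i < j")
          case True
          then have "(i + 1) mod length cs = Suc i" using lc by simp
          then show ?thesis using Pps True j unfolding P_def cs_def by simp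
        next
          case False
          then have "i = j" using i lc by simp
          then have "(i + 1) mod length cs = 0" using lc by simp
          then show ?thesis using \<open>i = j\<close> sym axz j unfolding cs_def x_def by simp
        qed
      qed
      then show False using acyc by simp
    qed
    ultimately have "j = 1" by simp
    then show ?thesis using j by simp
  qed
  obtain v where vV: "v \<in> V" and vx: "v \<noteq> x"
  proof -
    have "\<not> V \<subseteq> {x}"
    proof
      assume "V \<subseteq> {x}" then have "card V \<le> card {x}" by (rule card_mono[rotated]) simp
      then show False using two by simp
    qed
    then show ?thesis using that by blast
  qed
  have "(\<lambda>a b. a \<in> V \<and> b \<in> V \<and> adj a b)\<^sup>*\<^sup>* x v" using conn xV vV unfolding graph_connected_def by blast
  then obtain y where "x \<in> V \<and> y \<in> V \<and> adj x y" using vx by (cases rule: converse_rtranclpE) auto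
  then show ?thesis using nb_1 by blast
qed

lemma tree_edges:
  assumes "finite V" "V \<noteq> {}" "graph_connected V adj" "\<not> graph_has_cycle V adj"
    and sym: "\<And>a b. adj a b \<Longrightarrow> adj b a" and irr: "\<And>a. \<not> adj a a"
  shows "card (edges V adj) + 1 \<le> card V"
  using assms(1-4)
proof (induction "card V" arbitrary: V rule: less_induct)
  case less
  show ?case
  proof (cases "card V \<ge> 2")
    case False
    moreover have "card V > 0" using less.prems(1,2) card_gt_0_iff by blast
    ultimately have "card V = 1" by simp
    then obtain r where "V = {r}" using card_1_singletonE by blast
    then have "edges V adj = {}" unfolding edges_def using irr by auto
    then show ?thesis using \<open>card V = 1\<close> by simp
  next
    case True
    obtain x y where xV: "x \<in> V" and yV: "y \<in> V" and xy: "adj x y" and lf: "\<forall>z\<in>V. adj x z \<longrightarrow> z = y"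
      using leaf_exists[OF less.prems(1,3,4) sym irr True] by blast
    have yx: "y \<noteq> x" using xy irr by blast
    let ?V = "V - {x}"
    have conn': "graph_connected ?V adj"
      using remove_leaf_conn[OF less.prems(3) xV _ sym] lf by blast
    have acyc': "\<not> graph_has_cycle ?V adj"
      using less.prems(4) unfolding graph_has_cycle_def by blast
    have ne: "?V \<noteq> {}" using yV yx by blast
    have lt: "card ?V < card V" using xV less.prems(1) by (rule card_Diff1_less[rotated])
    have ih: "card (edges ?V adj) + 1 \<le> card ?V"
      using less.hyps[OF lt _ ne conn' acyc'] less.prems(1) by simp
    have E: "edges V adj = insert {x, y} (edges ?V adj)"
    proof
      show "edges V adj \<subseteq> insert {x, y} (edges ?V adj)"
      proof
        fix e assume "e \<in> edges V adj"
        then obtain a b where e: "e = {a,b}" "a \<in> V" "b \<in> V" "adj a b" unfolding edges_def by blast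
        show "e \<in> insert {x, y} (edges ?V adj)"
        proof (cases "a = x \<or> b = x")
          case True
          then show ?thesis using e lf sym by (auto simp: insert_commute)
        next
          case False then show ?thesis using e unfolding edges_def by blast
        qed
      qed
      show "insert {x, y} (edges ?V adj) \<subseteq> edges V adj"
        using xV yV xy unfolding edges_def by blast
    qed
    have nin: "{x, y} \<notin> edges ?V adj"
    proof
      assume "{x, y} \<in> edges ?V adj"
      then obtain a b where ab: "{x, y} = {a, b}" "a \<in> ?V" "b \<in> ?V" unfolding edges_def by blast
      then have "x \<in> {a, b}" by blast
      then show False using ab by blast
    qed
    have "card (edges V adj) = card (edges ?V adj) + 1"
      unfolding E using nin finite_edges[of ?V adj] less.prems(1) by simp
    then show ?thesis using ih lt xV less.prems(1) by simp
  qed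
qed

lemma factor_append:
  assumes "factor u (x @ y)"
  shows "factor u x \<and> factor u y"
proof -
  obtain i where i: "x @ y = map u [i..<i + length (x @ y)]" using assms unfolding factor_def by blast
  have "[i..<i + length (x @ y)] = [i..<i + length x] @ [i + length x..<i + length x + length y]"
    using upt_add_eq_append[of i "i + length x" "length y"] by (simp add: add.assoc)
  then have "x @ y = map u [i..<i + length x] @ map u [i + length x..<i + length x + length y]"
    using i by simp
  then have "x = map u [i..<i + length x]" "y = map u [i + length x..<i + length x + length y]"
    by (simp_all add: append_eq_append_conv)
  then show ?thesis unfolding factor_def by (metis add.assoc)
qed

lemma factor_ext: "factor u w \<Longrightarrow> \<exists>b. factor u (w @ [b])"
proof -
  assume "factor u w"
  then obtain i where i: "w = map u [i..<i + length w]" unfolding factor_def by blast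
  have "w @ [u (i + length w)] = map u [i..<i + length (w @ [u (i + length w)])]"
    using i by simp
  then show ?thesis unfolding factor_def by blast
qed

theorem lemma15:
  fixes u :: "nat \<Rightarrow> 'a::finite" and w :: "'a list"
  assumes "lang_closed_rev u"
    and "factor u w"
    and "palindrome w"
    and "graph_connected (Theta_V u w) (Theta_adj u w)"
  shows "mult u w \<ge> int (card (Eeq u w)) - 1
    \<and> (mult u w > int (card (Eeq u w)) - 1 \<longleftrightarrow> graph_has_cycle (Theta_V u w) (Theta_adj u w))
    \<and> (mult u w = int (card (Eeq u w)) - 1 \<longleftrightarrow> graph_is_tree (Theta_V u w) (Theta_adj u w))"
proof -
  have rv: "factor u (rev x)" if "factor u x" for x using assms(1) that unfolding lang_closed_rev_def by blast
  have pal: "rev w = w" using assms(3) unfolding palindrome_def by simp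
  define Ep where "Ep = Eplus u w"
  define Eb where "Eb = Eplus u w"
  have EmEp: "Eminus u w = Eplus u w"
  proof (intro set_eqI iffI)
    fix a assume "a \<in> Eminus u w"
    then have "factor u (rev (a # w))" using rv[of "a # w"] unfolding Eminus_def by simp
    then show "a \<in> Eplus u w" unfolding Eplus_def using pal by simp
  next
    fix a assume "a \<in> Eplus u w"
    then have "factor u (rev (w @ [a]))" using rv[of "w @ [a]"] unfolding Eplus_def by simp
    then show "a \<in> Eminus u w" unfolding Eminus_def using pal by simp
  qed
  have Ebsym: "(b, a) \<in> Eboth u w" if "(a, b) \<in> Eboth u w" for a b
  proof -
    have "factor u (rev (a # w @ [b]))" using rv[of "a # w @ [b]"] that unfolding Eboth_def by simp
    then show ?thesis unfolding Eboth_def using pal by simp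
  qed
  have Ebmem: "a \<in> Eplus u w \<and> b \<in> Eplus u w" if "(a, b) \<in> Eboth u w" for a b
  proof -
    have f: "factor u (a # w @ [b])" using that unfolding Eboth_def by simp
    then have "factor u (w @ [b])" using factor_append[of u "[a]" "w @ [b]"] by simp
    moreover have "factor u (a # w)" using f factor_append[of u "a # w" "[b]"] by simp
    ultimately show ?thesis using EmEp unfolding Eplus_def Eminus_def by auto
  qed
  define D where "D = {p \<in> Eboth u w. fst p \<noteq> snd p}"
  let ?V = "Theta_V u w" and ?adj = "Theta_adj u w"
  have adj_iff: "?adj a b \<longleftrightarrow> a \<noteq> b \<and> (a, b) \<in> Eboth u w" for a b
    unfolding Theta_adj_def using Ebsym Ebmem by blast
  have symA: "\<And>a b. ?adj a b \<Longrightarrow> ?adj b a" unfolding Theta_adj_def by blast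
  have irrA: "\<And>a. \<not> ?adj a a" unfolding Theta_adj_def by blast
  have finV: "finite ?V" by simp
  have neV: "?V \<noteq> {}" using factor_ext[OF assms(2)] unfolding Theta_V_def Eplus_def by blast
  define g where "g p = {fst p, snd p}" for p :: "'a \<times> 'a"
  have gD: "g ` D = edges ?V ?adj"
  proof
    show "g ` D \<subseteq> edges ?V ?adj"
      unfolding g_def D_def edges_def Theta_V_def using adj_iff Ebmem by fastforce
    show "edges ?V ?adj \<subseteq> g ` D"
    proof
      fix e assume "e \<in> edges ?V ?adj"
      then obtain a b where "e = {a, b}" "?adj a b" unfolding edges_def by blast
      then have "(a, b) \<in> D" "e = g (a, b)" using adj_iff unfolding D_def g_def by auto
      then show "e \<in> g ` D" by blast
    qed
  qed
  have fib: "card {p \<in> D. g p = e} = 2" if eD: "e \<in> g ` D" for e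
  proof -
    obtain p where p: "p \<in> D" "e = g p" using eD by blast
    obtain a b where ab: "(a, b) \<in> D" "e = {a, b}" using p unfolding g_def by (cases p) auto
    have "{p \<in> D. g p = e} = {(a, b), (b, a)}"
      using ab Ebsym unfolding D_def g_def by (auto simp: doubleton_eq_iff)
    moreover have "a \<noteq> b" using ab unfolding D_def by simp
    ultimately show ?thesis by simp
  qed
  have cD: "card D = 2 * card (edges ?V ?adj)"
  proof -
    have "card D = (\<Sum>p\<in>D. 1)" by simp
    also have "\<dots> = (\<Sum>e\<in>g ` D. \<Sum>p\<in>{p \<in> D. g p = e}. 1)"
      by (rule sum.image_gen) simp
    also have "\<dots> = (\<Sum>e\<in>g ` D. 2)" using fib by (intro sum.cong) auto
    finally show ?thesis using gD by simp
  qed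
  have split: "Eboth u w = (\<lambda>a. (a, a)) ` Eeq u w \<union> D"
    unfolding D_def Eeq_def Eboth_def by auto
  have cB: "card (Eboth u w) = card (Eeq u w) + card D"
  proof -
    have "card (Eboth u w) = card ((\<lambda>a. (a, a)) ` Eeq u w) + card D"
      unfolding split by (rule card_Un_disjoint) (auto simp: D_def)
    moreover have "card ((\<lambda>a. (a, a)) ` Eeq u w) = card (Eeq u w)"
      by (rule card_image) (auto simp: inj_on_def)
    ultimately show ?thesis by simp
  qed
  define e where "e = card (edges ?V ?adj)"
  define v where "v = card ?V"
  have m: "mult u w = int (card (Eeq u w)) + 2 * int e - 2 * int v + 1"
    unfolding mult_def cB cD e_def v_def EmEp Theta_V_def by simp
  obtain r where r: "r \<in> ?V" using neV by blast
  have g1: "v \<le> e + 1" using conn_edges_ge[OF finV r assms(4)] unfolding v_def e_def .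
  have g2: "graph_has_cycle ?V ?adj \<Longrightarrow> v \<le> e"
    using cycle_edges[OF finV assms(4) _ symA] unfolding v_def e_def by blast
  have g3: "\<not> graph_has_cycle ?V ?adj \<Longrightarrow> e + 1 \<le> v"
    using tree_edges[OF finV neV assms(4) _ symA irrA] unfolding v_def e_def by blast
  show ?thesis
  proof (cases "graph_has_cycle ?V ?adj")
    case True
    then show ?thesis using g1 g2[OF True] m unfolding graph_is_tree_def by simp
  next
    case False
    then show ?thesis using g1 g3[OF False] m assms(4) unfolding graph_is_tree_def by simp
  qed
qed

end
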